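(* Let $0<f_1<f_2<f_3$, let $2h=1$, and on $M_h$ let $F_L=\ell_{12}^2+\ell_{13}^2+\ell_{14}^2$ and $J_1=1-\sqrt{1-F_L}$. Then $J_1$ is an almost global $S^1$-action on $M_h$.
   Context: $\mathbf L=(\ell_{12},\ell_{13},\ell_{14},\ell_{23},\ell_{24},\ell_{34})\in\mathbb R^6\cong\mathfrak{so}(4)^*$ with the Lie–Poisson bracket of $\mathfrak{so}(4)$ (extending $\ell_{ji}=-\ell_{ij}$: $\{\ell_{ij},\ell_{jk}\}=-\ell_{ik}$ for distinct $i,j,k$, and $\{\ell_{ij},\ell_{kl}\}=0$ when $\{i,j\}\cap\{k,l\}=\emptyset$). $M_h=\{\mathbf L:\sum_{i<j}\ell_{ij}^2=2h,\ \ell_{12}\ell_{34}-\ell_{13}\ell_{24}+\ell_{14}\ell_{23}=0\}\cong S^2\times S^2$. Together with $G_L=f_1\ell_{34}^2+f_2\ell_{24}^2+f_3\ell_{23}^2$, $F_L$ forms the reduced Lamé integrable system. A function is an almost global $S^1$-action if its Hamiltonian vector field generates a $2\pi$-periodic flow (an $S^1$-action) everywhere except on the preimage of an isolated point of the image of the momentum map, where the function fails to be smooth / the vector field is undefined (here the set $F_L=1$, i.e. $\ell_{23}=\ell_{24}=\ell_{34}=0$). *)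

theory Defs
  imports "HOL-Analysis.Analysis"
begin

text \<open>Coordinates of so(4)* = R^6: index type for the six components l12,...,l34.\<close>

datatype idx = I12 | I13 | I14 | I23 | I24 | I34

lemma UNIV_idx: "(UNIV :: idx set) = {I12, I13, I14, I23, I24, I34}"
  by (auto intro: idx.exhaust)

instance idx :: finite
  by standard (simp add: UNIV_idx)

type_synonym vec6 = "real ^ idx"

fun fi :: "idx \<Rightarrow> nat" where
  "fi I12 = 1" | "fi I13 = 1" | "fi I14 = 1" | "fi I23 = 2" | "fi I24 = 2" | "fi I34 = 3"
fun fj :: "idx \<Rightarrow> nat" where
  "fj I12 = 2" | "fj I13 = 3" | "fj I14 = 4" | "fj I23 = 3" | "fj I24 = 4" | "fj I34 = 4"

text \<open>l_ij for arbitrary i,j in 1..4, extended antisymmetrically (l_ji = - l_ij, l_ii = 0).\<close>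
definition lc :: "vec6 \<Rightarrow> nat \<Rightarrow> nat \<Rightarrow> real" where
  "lc L i j = (if \<exists>a. fi a = i \<and> fj a = j then L $ (THE a. fi a = i \<and> fj a = j)
              else if \<exists>a. fi a = j \<and> fj a = i then - (L $ (THE a. fi a = j \<and> fj a = i))
              else 0)"

definition kd :: "nat \<Rightarrow> nat \<Rightarrow> real" where
  "kd i j = (if i = j then 1 else 0)"

text \<open>Lie--Poisson bracket of coordinate functions {l_a, l_b}(L) of so(4):
  {l_ij, l_kl} = - d_jk l_il + d_ik l_jl + d_jl l_ik - d_il l_jk,
  which is the unique bilinear extension of {l_ij,l_jk} = -l_ik, {l_ij,l_kl} = 0 for disjoint pairs.\<close>
definition lpb :: "vec6 \<Rightarrow> idx \<Rightarrow> idx \<Rightarrow> real" where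
  "lpb L a b = (let i = fi a; j = fj a; k = fi b; l = fj b in
     - kd j k * lc L i l + kd i k * lc L j l + kd j l * lc L i k - kd i l * lc L j k)"

text \<open>Hamiltonian vector field X_H of H w.r.t. the Lie--Poisson structure:
  (X_H)_a = {l_a, H} = sum_b {l_a, l_b} dH/dl_b.\<close>
definition hamvf :: "(vec6 \<Rightarrow> real) \<Rightarrow> vec6 \<Rightarrow> vec6" where
  "hamvf H L = (\<chi> a. \<Sum>b\<in>UNIV. lpb L a b * frechet_derivative H (at L) (axis b 1))"

text \<open>M_h: sum of squares = 2h, Pfaffian = 0.\<close>
definition Mh :: "real \<Rightarrow> vec6 set" where
  "Mh h = {L. (\<Sum>a\<in>UNIV. (L $ a)\<^sup>2) = 2 * h \<and>
              L$I12 * L$I34 - L$I13 * L$I24 + L$I14 * L$I23 = 0}"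

definition FL :: "vec6 \<Rightarrow> real" where
  "FL L = (L$I12)\<^sup>2 + (L$I13)\<^sup>2 + (L$I14)\<^sup>2"

definition GL :: "real \<Rightarrow> real \<Rightarrow> real \<Rightarrow> vec6 \<Rightarrow> real" where
  "GL f1 f2 f3 L = f1 * (L$I34)\<^sup>2 + f2 * (L$I24)\<^sup>2 + f3 * (L$I23)\<^sup>2"

definition J1 :: "vec6 \<Rightarrow> real" where
  "J1 L = 1 - sqrt (1 - FL L)"

text \<open>H is an almost global S^1-action on M with exceptional set S (the preimage of an
  isolated point of the momentum image): off S, H is differentiable and its Hamiltonian
  flow through every point exists for all times, stays in M - S and is 2pi-periodic;
  on S, H fails to be differentiable.\<close>
definition almost_global_S1 :: "(vec6 \<Rightarrow> real) \<Rightarrow> vec6 set \<Rightarrow> vec6 set \<Rightarrow> bool" where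
  "almost_global_S1 H M S \<longleftrightarrow>
     (\<forall>p\<in>S. \<not> H differentiable (at p)) \<and>
     (\<forall>p\<in>M - S. H differentiable (at p)) \<and>
     (\<forall>p\<in>M - S. \<exists>\<gamma> :: real \<Rightarrow> vec6.
        \<gamma> 0 = p \<and> (\<forall>t. \<gamma> t \<in> M - S) \<and>
        (\<forall>t. (\<gamma> has_vector_derivative hamvf H (\<gamma> t)) (at t)) \<and>
        (\<forall>t. \<gamma> (t + 2 * pi) = \<gamma> t))"

end

theory Submission
  imports Defs
begin


lemma fifj: "(fi a = i \<and> fj a = j) \<longleftrightarrow>
  (a = I12 \<and> i = 1 \<and> j = 2 \<or> a = I13 \<and> i = 1 \<and> j = 3 \<or> a = I14 \<and> i = 1 \<and> j = 4 \<or>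
   a = I23 \<and> i = 2 \<and> j = 3 \<or> a = I24 \<and> i = 2 \<and> j = 4 \<or> a = I34 \<and> i = 3 \<and> j = 4)"
  by (cases a) auto

lemma lc_simps:
  "lc L (Suc 0) 2 = L$I12" "lc L (Suc 0) 3 = L$I13" "lc L (Suc 0) 4 = L$I14" "lc L 2 3 = L$I23" "lc L 2 4 = L$I24" "lc L 3 4 = L$I34"
  "lc L 2 (Suc 0) = - L$I12" "lc L 3 (Suc 0) = - L$I13" "lc L 4 (Suc 0) = - L$I14" "lc L 3 2 = - L$I23" "lc L 4 2 = - L$I24" "lc L 4 3 = - L$I34"
  "lc L (Suc 0) (Suc 0) = 0" "lc L 2 2 = 0" "lc L 3 3 = 0" "lc L 4 4 = 0"
  by (simp_all add: lc_def fifj)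

lemma FL_deriv: "(FL has_derivative (\<lambda>h. 2*L$I12*h$I12 + 2*L$I13*h$I13 + 2*L$I14*h$I14)) (at L)"
  unfolding FL_def
  by (rule derivative_eq_intros refl bounded_linear.has_derivative[OF bounded_linear_vec_nth] | simp)+
     (simp add: fun_eq_iff algebra_simps)

lemma J1_deriv:
  assumes "FL L < 1"
  shows "(J1 has_derivative (\<lambda>h. (L$I12*h$I12 + L$I13*h$I13 + L$I14*h$I14)/sqrt(1-FL L))) (at L)"
proof -
  have d1: "((\<lambda>x. 1 - FL x) has_derivative (\<lambda>h. 0 - (2*L$I12*h$I12 + 2*L$I13*h$I13 + 2*L$I14*h$I14))) (at L)"
    by (intro has_derivative_diff has_derivative_const FL_deriv)
  have d2: "((\<lambda>x. sqrt (1 - FL x)) has_derivative (\<lambda>h. (0 - (2*L$I12*h$I12 + 2*L$I13*h$I13 + 2*L$I14*h$I14)) * (inverse (sqrt (1 - FL L)) / 2))) (at L)"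
    by (rule DERIV_compose_FDERIV[OF DERIV_real_sqrt d1]) (use assms in simp)
  have "(J1 has_derivative (\<lambda>h. 0 - (0 - (2*L$I12*h$I12 + 2*L$I13*h$I13 + 2*L$I14*h$I14)) * (inverse (sqrt (1 - FL L)) / 2))) (at L)"
    unfolding J1_def by (intro has_derivative_diff has_derivative_const d2)
  moreover have "(\<lambda>h. 0 - (0 - (2*L$I12*h$I12 + 2*L$I13*h$I13 + 2*L$I14*h$I14)) * (inverse (sqrt (1 - FL L)) / 2))
     = (\<lambda>h. (L$I12*h$I12 + L$I13*h$I13 + L$I14*h$I14)/sqrt(1-FL L))"
    by (simp add: fun_eq_iff divide_simps)
  ultimately show ?thesis by simp
qed

lemma hamvf_J1:
  assumes "FL L < 1"
  shows "hamvf J1 L $ a = (if a = I12 then (L$I13*L$I23 + L$I14*L$I24) / sqrt(1-FL L)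
     else if a = I13 then (L$I14*L$I34 - L$I12*L$I23) / sqrt(1-FL L)
     else if a = I14 then (- L$I12*L$I24 - L$I13*L$I34) / sqrt(1-FL L) else 0)"
proof -
  have ax: "\<And>b. (L$I12*(axis b 1::vec6)$I12 + L$I13*(axis b 1::vec6)$I13 + L$I14*(axis b 1::vec6)$I14)
     = (if b = I12 then L$I12 else if b = I13 then L$I13 else if b = I14 then L$I14 else 0)"
    by (simp add: axis_def)
  show ?thesis unfolding hamvf_def frechet_derivative_at[OF J1_deriv[OF assms], symmetric] ax
    by (cases a) (simp_all add: UNIV_idx lpb_def kd_def lc_simps Let_def diff_divide_distrib add_divide_distrib mult.commute)
qed
lemma alg:
  fixes a b c d e f co si r q :: real
  assumes "co^2 + si^2 = 1" "r^2 = d^2+e^2+f^2" "r*q = 1" "a*f - b*e + c*d = 0"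
  defines "X \<equiv> co*a + si*((b*d+c*e)*q)" and "Y \<equiv> co*b + si*((c*f - a*d)*q)" and "Z \<equiv> co*c + si*((-a*e - b*f)*q)"
  shows "X^2+Y^2+Z^2 = a^2+b^2+c^2" and "X*f - Y*e + Z*d = 0"
   and "-(si*a) + co*((b*d+c*e)*q) = (Y*d + Z*e)*q"
   and "-(si*b) + co*((c*f - a*d)*q) = (Z*f - X*d)*q"
   and "-(si*c) + co*((-a*e - b*f)*q) = (-X*e - Y*f)*q"
  using assms unfolding X_def Y_def Z_def by algebra+


lemma J1_not_diff:
  assumes F1: "FL p = 1"
  shows "\<not> J1 differentiable (at p)"
proof
  assume "J1 differentiable (at p)"
  then obtain D where D: "(J1 has_derivative D) (at p)" by (auto simp: differentiable_def)
  define v where "v = (\<chi> i. if i = I12 \<or> i = I13 \<or> i = I14 then p$i else 0)"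
  have lin: "((\<lambda>s::real. p + s *\<^sub>R v) has_derivative (\<lambda>s. s *\<^sub>R v)) (at 0)"
    by (auto intro!: derivative_eq_intros)
  have D': "(J1 has_derivative D) (at (p + 0 *\<^sub>R v))" using D by simp
  have c: "((\<lambda>s. J1 (p + s *\<^sub>R v)) has_derivative (\<lambda>s. D (s *\<^sub>R v))) (at 0)"
    using has_derivative_compose[OF lin D'] .
  have c2: "((\<lambda>s. 1 - J1 (p + s *\<^sub>R v)) has_derivative (\<lambda>s. 0 - D (s *\<^sub>R v))) (at 0)"
    by (intro has_derivative_diff has_derivative_const c)
  have J1p: "J1 (p + 0 *\<^sub>R v) = 1" using F1 by (simp add: J1_def)
  have "((\<lambda>s. (1 - J1 (p + s *\<^sub>R v)) * (1 - J1 (p + s *\<^sub>R v))) has_derivative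
      (\<lambda>s. (1 - J1 (p + 0 *\<^sub>R v)) * (0 - D (s *\<^sub>R v)) + (0 - D (s *\<^sub>R v)) * (1 - J1 (p + 0 *\<^sub>R v)))) (at 0)"
    by (rule has_derivative_mult[OF c2 c2])
  moreover have z: "((*) (0::real)) = (\<lambda>s::real. 0)" by (rule ext) simp
  ultimately have "((\<lambda>s. (1 - J1 (p + s *\<^sub>R v)) * (1 - J1 (p + s *\<^sub>R v))) has_field_derivative 0) (at 0)"
    unfolding has_field_derivative_def z using J1p by simp
  then have lim: "((\<lambda>s. ((1 - J1 (p + s *\<^sub>R v)) * (1 - J1 (p + s *\<^sub>R v)) - (1 - J1 (p + 0 *\<^sub>R v)) * (1 - J1 (p + 0 *\<^sub>R v))) / (s - 0)) \<longlongrightarrow> 0) (at_right 0)"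
    unfolding has_field_derivative_iff filterlim_at_split by blast
  have FLs: "FL (p + s *\<^sub>R v) = (1 + s)^2" for s
  proof -
    have "FL (p + s *\<^sub>R v) = (1 + s)^2 * FL p"
      by (simp add: FL_def v_def power2_eq_square algebra_simps)
    thus ?thesis using F1 by simp
  qed
  have ev: "\<forall>\<^sub>F s in at_right 0. 2 + s = ((1 - J1 (p + s *\<^sub>R v)) * (1 - J1 (p + s *\<^sub>R v)) - (1 - J1 (p + 0 *\<^sub>R v)) * (1 - J1 (p + 0 *\<^sub>R v))) / (s - 0)"
  proof -
    have "\<forall>\<^sub>F s in at_right (0::real). s \<in> {0<..<1}" by (rule eventually_at_right_real) simp
    then show ?thesis
    proof (rule eventually_mono)
      fix s :: real assume s: "s \<in> {0<..<1}"
      have ss: "0 < s * s" using s by simp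
      have e: "1 - (1 + s)^2 = - (2 * s + s * s)" by (simp add: power2_eq_square algebra_simps)
      have neg: "1 - (1 + s)^2 < 0" proof -
        have "0 < s" using s by simp
        then show ?thesis unfolding e using ss by linarith
      qed
      have "sqrt (1 - (1 + s)^2) * sqrt (1 - (1 + s)^2) = (1 + s)^2 - 1"
        using neg by (simp add: real_sqrt_minus[symmetric] del: real_sqrt_minus)
      then show "2 + s = ((1 - J1 (p + s *\<^sub>R v)) * (1 - J1 (p + s *\<^sub>R v)) - (1 - J1 (p + 0 *\<^sub>R v)) * (1 - J1 (p + 0 *\<^sub>R v))) / (s - 0)"
        using s J1p by (simp add: J1_def FLs power2_eq_square field_simps)
    qed
  qed
  have "((\<lambda>s::real. 2 + s) \<longlongrightarrow> 2) (at_right 0)"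
    by (auto intro!: tendsto_eq_intros)
  then have "((\<lambda>s. ((1 - J1 (p + s *\<^sub>R v)) * (1 - J1 (p + s *\<^sub>R v)) - (1 - J1 (p + 0 *\<^sub>R v)) * (1 - J1 (p + 0 *\<^sub>R v))) / (s - 0)) \<longlongrightarrow> 2) (at_right 0)"
    using ev by (rule Lim_transform_eventually)
  from tendsto_unique[OF _ this lim] show False by simp
qed


lemma flow:
  assumes FLp: "FL p < 1" and S: "FL p + (p$I23)^2 + (p$I24)^2 + (p$I34)^2 = 1"
    and K: "p$I12 * p$I34 - p$I13 * p$I24 + p$I14 * p$I23 = 0"
  shows "\<exists>\<gamma>. \<gamma> 0 = p \<and> (\<forall>t. FL (\<gamma> t) = FL p \<and> (\<gamma> t)$I23 = p$I23 \<and> (\<gamma> t)$I24 = p$I24 \<and> (\<gamma> t)$I34 = p$I34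
      \<and> (\<gamma> t)$I12 * (\<gamma> t)$I34 - (\<gamma> t)$I13 * (\<gamma> t)$I24 + (\<gamma> t)$I14 * (\<gamma> t)$I23 = 0)
    \<and> (\<forall>t. (\<gamma> has_vector_derivative hamvf J1 (\<gamma> t)) (at t)) \<and> (\<forall>t. \<gamma> (t + 2*pi) = \<gamma> t)"
proof -
  define a where "a = p$I12"
  define b where "b = p$I13"
  define c where "c = p$I14"
  define d where "d = p$I23"
  define e where "e = p$I24"
  define f where "f = p$I34"
  define r where "r = sqrt (1 - FL p)"
  define q where "q = inverse r"
  have rpos: "r > 0" using FLp by (simp add: r_def)
  have r2: "r^2 = d^2+e^2+f^2" using S FLp by (simp add: r_def d_def e_def f_def)
  have rq: "r*q = 1" using rpos by (simp add: q_def)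
  have K': "a*f - b*e + c*d = 0" using K by (simp add: a_def b_def c_def d_def e_def f_def)
  define P0 :: vec6 where "P0 = (\<chi> i. if i = I12 \<or> i = I13 \<or> i = I14 then 0 else p$i)"
  define V1 :: vec6 where "V1 = (\<chi> i. if i = I12 then a else if i = I13 then b else if i = I14 then c else 0)"
  define V2 :: vec6 where "V2 = (\<chi> i. if i = I12 then (b*d+c*e)*q else if i = I13 then (c*f - a*d)*q
      else if i = I14 then (-a*e - b*f)*q else 0)"
  define \<gamma> where "\<gamma> = (\<lambda>t::real. P0 + cos t *\<^sub>R V1 + sin t *\<^sub>R V2)"
  have comps: "\<gamma> t $ I12 = cos t*a + sin t*((b*d+c*e)*q)" "\<gamma> t $ I13 = cos t*b + sin t*((c*f - a*d)*q)"
    "\<gamma> t $ I14 = cos t*c + sin t*((-a*e - b*f)*q)"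
    "\<gamma> t $ I23 = d" "\<gamma> t $ I24 = e" "\<gamma> t $ I34 = f" for t
    by (simp_all add: \<gamma>_def P0_def V1_def V2_def d_def e_def f_def)
  note A = alg[OF sin_cos_squared_add2 r2 rq K']
  have FLg: "FL (\<gamma> t) = FL p" for t
    using A(1)[of t] by (simp add: FL_def comps a_def b_def c_def)
  have Kg: "(\<gamma> t)$I12 * (\<gamma> t)$I34 - (\<gamma> t)$I13 * (\<gamma> t)$I24 + (\<gamma> t)$I14 * (\<gamma> t)$I23 = 0" for t
    using A(2)[of t] by (simp add: comps)
  have g0: "\<gamma> 0 = p"
    by (simp add: \<gamma>_def P0_def V1_def vec_eq_iff a_def b_def c_def)
  have per: "\<gamma> (t + 2*pi) = \<gamma> t" for t
    by (simp add: \<gamma>_def)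
  have vd: "(\<gamma> has_vector_derivative ((- sin t) *\<^sub>R V1 + cos t *\<^sub>R V2)) (at t)" for t
    unfolding \<gamma>_def by (auto intro!: derivative_eq_intros)
  have hv: "hamvf J1 (\<gamma> t) = (- sin t) *\<^sub>R V1 + cos t *\<^sub>R V2" for t
  proof -
    have sq: "sqrt (1 - FL (\<gamma> t)) = r" by (simp add: FLg r_def)
    have "FL (\<gamma> t) < 1" using FLg FLp by simp
    note H = hamvf_J1[OF this, unfolded sq]
    show ?thesis unfolding vec_eq_iff
    proof
      fix i show "hamvf J1 (\<gamma> t) $ i = ((- sin t) *\<^sub>R V1 + cos t *\<^sub>R V2) $ i"
      proof (cases i)
        case I12 then show ?thesis using A(3)[of t] by (simp add: H comps V1_def V2_def divide_inverse q_def[symmetric])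
      next
        case I13 then show ?thesis using A(4)[of t] by (simp add: H comps V1_def V2_def divide_inverse q_def[symmetric])
      next
        case I14 then show ?thesis using A(5)[of t] by (simp add: H comps V1_def V2_def divide_inverse q_def[symmetric])
      qed (simp_all add: H V1_def V2_def)
    qed
  qed
  show ?thesis
    using g0 FLg comps Kg vd hv per by (intro exI[of _ \<gamma>]) (auto simp: d_def e_def f_def)
qed


theorem lemma13:
  fixes f1 f2 f3 h :: real
  assumes "0 < f1" and "f1 < f2" and "f2 < f3" and "2 * h = 1"
  shows "almost_global_S1 J1 (Mh h) {L \<in> Mh h. FL L = 1}"
proof -
  have Mh_iff: "L \<in> Mh h \<longleftrightarrow> FL L + (L$I23)^2 + (L$I24)^2 + (L$I34)^2 = 1 \<and>
      L$I12 * L$I34 - L$I13 * L$I24 + L$I14 * L$I23 = 0" for L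
    using assms(4) by (simp add: Mh_def UNIV_idx FL_def algebra_simps)
  have FLle: "L \<in> Mh h \<Longrightarrow> FL L \<le> 1" for L
  proof -
    assume "L \<in> Mh h"
    then have "FL L + (L$I23)^2 + (L$I24)^2 + (L$I34)^2 = 1" using Mh_iff by blast
    moreover have "0 \<le> (L$I23)^2" "0 \<le> (L$I24)^2" "0 \<le> (L$I34)^2" by simp_all
    ultimately show ?thesis by linarith
  qed
  show ?thesis unfolding almost_global_S1_def
  proof (intro conjI ballI)
    fix p assume "p \<in> {L \<in> Mh h. FL L = 1}"
    then show "\<not> J1 differentiable (at p)" using J1_not_diff by auto
  next
    fix p assume p: "p \<in> Mh h - {L \<in> Mh h. FL L = 1}"
    then have "FL p < 1" using FLle[of p] by auto
    then show "J1 differentiable (at p)" using J1_deriv unfolding differentiable_def by blast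
  next
    fix p assume p: "p \<in> Mh h - {L \<in> Mh h. FL L = 1}"
    then have FLp: "FL p < 1" using FLle[of p] by auto
    have pM: "FL p + (p$I23)^2 + (p$I24)^2 + (p$I34)^2 = 1"
      "p$I12 * p$I34 - p$I13 * p$I24 + p$I14 * p$I23 = 0" using p Mh_iff by auto
    obtain \<gamma> where g: "\<gamma> 0 = p" and gt: "\<forall>t. FL (\<gamma> t) = FL p \<and> (\<gamma> t)$I23 = p$I23 \<and> (\<gamma> t)$I24 = p$I24 \<and> (\<gamma> t)$I34 = p$I34
      \<and> (\<gamma> t)$I12 * (\<gamma> t)$I34 - (\<gamma> t)$I13 * (\<gamma> t)$I24 + (\<gamma> t)$I14 * (\<gamma> t)$I23 = 0"
      and gd: "\<forall>t. (\<gamma> has_vector_derivative hamvf J1 (\<gamma> t)) (at t)" and gp: "\<forall>t. \<gamma> (t + 2*pi) = \<gamma> t"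
      using flow[OF FLp pM] by blast
    have "\<forall>t. \<gamma> t \<in> Mh h - {L \<in> Mh h. FL L = 1}"
    proof
      fix t
      have "\<gamma> t \<in> Mh h" unfolding Mh_iff using gt[rule_format, of t] pM by metis
      moreover have "FL (\<gamma> t) \<noteq> 1" using gt FLp by simp
      ultimately show "\<gamma> t \<in> Mh h - {L \<in> Mh h. FL L = 1}" by simp
    qed
    then show "\<exists>\<gamma> :: real \<Rightarrow> vec6. \<gamma> 0 = p \<and> (\<forall>t. \<gamma> t \<in> Mh h - {L \<in> Mh h. FL L = 1}) \<and>
        (\<forall>t. (\<gamma> has_vector_derivative hamvf J1 (\<gamma> t)) (at t)) \<and> (\<forall>t. \<gamma> (t + 2 * pi) = \<gamma> t)"
      using g gd gp by blast
  qed
qed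

end
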